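(* Let $S$ be a finite set of size $n$ and let $\mathcal{Y}$ be the set of all pairs $(+,* )$ of binary operations on $S$ such that $(S,+,* )$ is a ring. Then there exists a query-algorithm with respect to $\mathcal{Y}$, in which each query asks either for $x+y$ or for $x*y$ for a chosen pair $(x,y)\in S^2$, which recovers both operations (i.e. distinct elements of $\mathcal{Y}$ lead to distinct leaves and each leaf corresponds to exactly one element of $\mathcal{Y}$) and uses at most \[n+(\log_2 n)^2\] queries for every $(+,* )\in\mathcal{Y}$.
   Context: A query-algorithm for a set $\mathcal{Y}$ of pairs $(+,* )$ of binary operations on a finite set $S$ is a rooted tree whose non-leaf nodes $v$ are labeled by a query of the form "$x_v+y_v$" or "$x_v*y_v$" with $(x_v,y_v)\in S^2$, whose leaves are unlabeled, and whose edges from a node to its children are labeled by pairwise distinct elements of $S$ (possible answers); for every $(+,* )\in\mathcal{Y}$ there must be a root-to-leaf path in which each edge leaving a node $v$ is labeled with the true value of the query at $v$ under $(+,* )$. This leaf $L(+,* )$ is unique, and the algorithm solves product-recovering if $L$ is a bijection from $\mathcal{Y}$ to the set of leaves. The number of queries used on $(+,* )$ is the depth of $L(+,* )$. *)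

theory Defs
  imports Complex_Main "HOL-Algebra.Ring"
begin

text \<open>Query-algorithms. A node asks either x+y (flag True) or x*y (flag False);
  its children are given by a partial map from answers (pairwise distinct
  elements of S) to subtrees.\<close>

datatype 'a qtree = Leaf | Query bool 'a 'a "'a \<Rightarrow> 'a qtree option"

type_synonym 'a ops = "('a \<Rightarrow> 'a \<Rightarrow> 'a) \<times> ('a \<Rightarrow> 'a \<Rightarrow> 'a)"

definition answer :: "bool \<Rightarrow> 'a \<Rightarrow> 'a \<Rightarrow> 'a ops \<Rightarrow> 'a" where
  "answer b x y opr = (if b then fst opr x y else snd opr x y)"

text \<open>Leaves are identified with the (unique) sequence of edge labels from the root.\<close>
inductive leaf_path :: "'a qtree \<Rightarrow> 'a list \<Rightarrow> bool" where
  "leaf_path Leaf []"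
| "ch v = Some t \<Longrightarrow> leaf_path t ps \<Longrightarrow> leaf_path (Query b x y ch) (v # ps)"

inductive reaches :: "'a qtree \<Rightarrow> 'a ops \<Rightarrow> 'a list \<Rightarrow> bool" where
  "reaches Leaf opr []"
| "ch (answer b x y opr) = Some t \<Longrightarrow> reaches t opr ps \<Longrightarrow>
     reaches (Query b x y ch) opr (answer b x y opr # ps)"

definition leaf_of :: "'a qtree \<Rightarrow> 'a ops \<Rightarrow> 'a list" where
  "leaf_of T opr = (THE ps. reaches T opr ps)"

definition product_recovering :: "'a qtree \<Rightarrow> 'a ops set \<Rightarrow> bool" where
  "product_recovering T Y \<longleftrightarrow>
     (\<forall>opr\<in>Y. \<exists>ps. reaches T opr ps) \<and>
     bij_betw (leaf_of T) Y {ps. leaf_path T ps}"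

definition queries_used :: "'a qtree \<Rightarrow> 'a ops \<Rightarrow> nat" where
  "queries_used T opr = length (leaf_of T opr)"

text \<open>All pairs (+,*) of binary operations on the whole (finite) type making it a
  ring (associative, with identity) in the sense of HOL-Algebra.\<close>
definition ring_ops :: "'a ops set" where
  "ring_ops = {(p, m). \<exists>z u. ring \<lparr>carrier = UNIV, mult = m, one = u, zero = z, add = p\<rparr>}"

end

theory Submission
  imports Defs
begin


locale agrp =
  fixes p :: "'a::finite \<Rightarrow> 'a \<Rightarrow> 'a" and z :: 'a
  assumes assoc: "p (p x y) w = p x (p y w)"
    and comm: "p x y = p y x"
    and lz: "p z x = x"
    and ex_inv: "\<exists>y. p y x = z"

locale rg = agrp +
  fixes m :: "'a::finite \<Rightarrow> 'a \<Rightarrow> 'a"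
  assumes ldist: "m (p x y) w = p (m x w) (m y w)"
    and rdist: "m w (p x y) = p (m w x) (m w y)"

lemma ring_ops_rg:
  assumes "(pp, mm) \<in> (ring_ops :: ('a::finite) ops set)"
  shows "\<exists>zz. rg pp zz mm"
proof -
  from assms obtain zz u where R: "ring \<lparr>carrier = (UNIV::'a set), mult = mm, one = u, zero = zz, add = pp\<rparr>"
    unfolding ring_ops_def by auto
  let ?R = "\<lparr>carrier = (UNIV::'a set), mult = mm, one = u, zero = zz, add = pp\<rparr>"
  interpret R: ring ?R by (rule R)
  have "rg pp zz mm"
  proof
    fix x y w :: 'a
    show "pp (pp x y) w = pp x (pp y w)" using R.a_assoc[ of x y w] by simp
    show "pp x y = pp y x" using R.a_comm[ of x y] by simp
    show "pp zz x = x" using R.l_zero[ of x] by simp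
    show "\<exists>y. pp y x = zz" using R.l_neg[ of x] by (intro exI[of _ "a_inv ?R x"]) simp
    show "mm (pp x y) w = pp (mm x w) (mm y w)" using R.l_distr[ of x y w] by simp
    show "mm w (pp x y) = pp (mm w x) (mm w y)" using R.r_distr[ of x y w] by simp
  qed
  then show ?thesis by blast
qed



definition nm :: "('a \<Rightarrow> 'a \<Rightarrow> 'a) \<Rightarrow> 'a \<Rightarrow> nat \<Rightarrow> 'a \<Rightarrow> 'a" where
  "nm p z k g = ((\<lambda>x. p x g) ^^ k) z"

lemma nm_0[simp]: "nm p z 0 g = z" by (simp add: nm_def)
lemma nm_Suc: "nm p z (Suc k) g = p (nm p z k g) g" by (simp add: nm_def)

inductive_set cl :: "('a \<Rightarrow> 'a \<Rightarrow> 'a) \<Rightarrow> 'a \<Rightarrow> 'a set \<Rightarrow> 'a set" for p z G where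
  cl_z: "z \<in> cl p z G"
| cl_g: "g \<in> G \<Longrightarrow> g \<in> cl p z G"
| cl_p: "x \<in> cl p z G \<Longrightarrow> y \<in> cl p z G \<Longrightarrow> p x y \<in> cl p z G"

lemma cl_mono: "x \<in> cl p z G \<Longrightarrow> G \<subseteq> G' \<Longrightarrow> x \<in> cl p z G'"
  by (induction rule: cl.induct) (auto intro: cl.intros)

lemma cl_nm: "g \<in> cl p z G \<Longrightarrow> nm p z k g \<in> cl p z G"
  by (induction k) (auto simp: nm_Suc intro: cl.intros)

context agrp begin

lemma rz[simp]: "p x z = x" using comm[of x z] lz[of x] by simp
lemma lz'[simp]: "p z x = x" by (rule lz)
lemma lcomm: "p x (p y w) = p y (p x w)" by (metis assoc comm)
lemmas ac = assoc comm lcomm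

lemma cancel: "p x y = p x y' \<Longrightarrow> y = y'"
proof -
  assume h: "p x y = p x y'"
  obtain i where i: "p i x = z" using ex_inv by blast
  have "y = p (p i x) y" by (simp add: i)
  also have "\<dots> = p (p i x) y'" by (simp add: assoc h)
  also have "\<dots> = y'" by (simp add: i)
  finally show ?thesis .
qed

lemma cancel_r: "p y x = p y' x \<Longrightarrow> y = y'" using cancel[of x y y'] comm[of y x] comm[of y' x] by simp

abbreviation N where "N k g \<equiv> nm p z k g"

lemma nm_1[simp]: "N 1 g = g" by (simp add: nm_Suc)
lemma nm_Suc0[simp]: "N (Suc 0) g = g" by (simp add: nm_Suc)

lemma nm_add: "N (a + b) g = p (N a g) (N b g)"
  by (induction b) (simp_all add: nm_Suc assoc)

lemma nm_order: "\<exists>q>0. N q g = z"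
proof -
  have "\<not> inj_on (\<lambda>k. N k g) (atMost (card (UNIV :: 'a set)))"
  proof
    assume "inj_on (\<lambda>k. N k g) (atMost (card (UNIV :: 'a set)))"
    then have "card ((\<lambda>k. N k g) ` (atMost (card (UNIV :: 'a set)))) = card (atMost (card (UNIV :: 'a set)))" by (rule card_image)
    moreover have "card ((\<lambda>k. N k g) ` (atMost (card (UNIV :: 'a set)))) \<le> card (UNIV :: 'a set)" by (rule card_mono) auto
    ultimately show False by simp
  qed
  then obtain a b where ab: "a \<noteq> b" "N a g = N b g" unfolding inj_on_def by blast
  { fix a b assume "a < b" "N a g = N b g"
    then have "p (N a g) (N (b - a) g) = p (N a g) z" using nm_add[of a "b - a" g] by simp
    then have "N (b - a) g = z" by (rule cancel)
    then have "\<exists>q>0. N q g = z" using \<open>a < b\<close> by (intro exI[of _ "b - a"]) simp }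
  with ab show ?thesis by (cases "a < b") (auto simp: linorder_neq_iff)
qed

lemma nm_mult_z: "N j g = z \<Longrightarrow> N (c * j) g = z"
  by (induction c) (simp_all add: nm_add)

lemma nm_mod: "N j g = z \<Longrightarrow> N k g = N (k mod j) g"
proof -
  assume h: "N j g = z"
  have "N k g = N ((k div j) * j + k mod j) g" by simp
  also have "\<dots> = N (k mod j) g" by (simp only: nm_add nm_mult_z[OF h] lz)
  finally show ?thesis .
qed

lemma closed_nm: "(\<forall>x\<in>S. \<forall>y\<in>S. p x y \<in> S) \<Longrightarrow> z \<in> S \<Longrightarrow> g \<in> S \<Longrightarrow> N k g \<in> S"
  by (induction k) (auto simp: nm_Suc)

lemma sub_cancel:
  assumes cS: "\<forall>x\<in>S. \<forall>y\<in>S. p x y \<in> S" and zS: "z \<in> S" and h: "h \<in> S" "h' \<in> S"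
    and e: "p h t = h'"
  shows "t \<in> S"
proof -
  obtain q where o: "q > 0" "N q h = z" using nm_order by blast
  have "N q h = p (N (q - 1) h) h" using o(1) by (metis Suc_diff_1 nm_Suc)
  then have i: "p (N (q - 1) h) h = z" using o by simp
  have "t = p (p (N (q - 1) h) h) t" by (simp only: i lz')
  also have "\<dots> = p (N (q - 1) h) h'" by (simp add: assoc e)
  finally show ?thesis using closed_nm[OF cS zS h(1)] cS h(2) by simp
qed

lemma zero_unique: "(\<And>x. p z' x = x) \<Longrightarrow> z' = z"
  by (metis rz)

end

context rg begin
lemma mz[simp]: "m z y = z"
proof -
  have "p (m z y) (m z y) = p (m z y) z" by (metis ldist lz rz)
  then show ?thesis by (rule cancel)
qed
lemma mz'[simp]: "m y z = z"
proof -
  have "p (m y z) (m y z) = p (m y z) z" by (metis rdist lz rz)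
  then show ?thesis by (rule cancel)
qed
end



lemma reaches_det: "reaches T r ps \<Longrightarrow> reaches T r ps' \<Longrightarrow> ps = ps'"
proof (induction arbitrary: ps' rule: reaches.induct)
  case (1 opr) then show ?case by (auto elim: reaches.cases)
next
  case (2 ch b x y opr t ps)
  from 2(4) show ?case by (cases rule: reaches.cases) (use 2 in auto)
qed

lemma reaches_leaf_path: "reaches T r ps \<Longrightarrow> leaf_path T ps"
  by (induction rule: reaches.induct) (auto intro: leaf_path.intros)

lemma leaf_of_eq: "reaches T r ps \<Longrightarrow> leaf_of T r = ps"
  unfolding leaf_of_def using reaches_det by blast

fun build :: "('s \<Rightarrow> (bool \<times> 'a \<times> 'a) option) \<Rightarrow> ('s \<Rightarrow> 'a \<Rightarrow> 's) \<Rightarrow> nat \<Rightarrow> 's \<Rightarrow> 'a ops set \<Rightarrow> 'a qtree" where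
  "build nq upd 0 s Y = Leaf"
| "build nq upd (Suc n) s Y = (case nq s of None \<Rightarrow> Leaf | Some (b, x, y) \<Rightarrow>
     Query b x y (\<lambda>v. if v \<in> (\<lambda>r. answer b x y r) ` Y
        then Some (build nq upd n (upd s v) {r\<in>Y. answer b x y r = v}) else None))"

fun pth :: "('s \<Rightarrow> (bool \<times> 'a \<times> 'a) option) \<Rightarrow> ('s \<Rightarrow> 'a \<Rightarrow> 's) \<Rightarrow> nat \<Rightarrow> 's \<Rightarrow> 'a ops \<Rightarrow> 'a list" where
  "pth nq upd 0 s r = []"
| "pth nq upd (Suc n) s r = (case nq s of None \<Rightarrow> [] | Some (b, x, y) \<Rightarrow>
     answer b x y r # pth nq upd n (upd s (answer b x y r)) r)"

fun endst :: "('s \<Rightarrow> (bool \<times> 'a \<times> 'a) option) \<Rightarrow> ('s \<Rightarrow> 'a \<Rightarrow> 's) \<Rightarrow> nat \<Rightarrow> 's \<Rightarrow> 'a ops \<Rightarrow> 's" where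
  "endst nq upd 0 s r = s"
| "endst nq upd (Suc n) s r = (case nq s of None \<Rightarrow> s | Some (b, x, y) \<Rightarrow>
     endst nq upd n (upd s (answer b x y r)) r)"

lemma build_reaches: "r \<in> Y \<Longrightarrow> reaches (build nq upd n s Y) r (pth nq upd n s r)"
proof (induction n arbitrary: s Y)
  case 0 then show ?case by (simp add: reaches.intros)
next
  case (Suc n)
  show ?case
  proof (cases "nq s")
    case None then show ?thesis by (simp add: reaches.intros)
  next
    case (Some q)
    obtain b x y where q: "q = (b, x, y)" by (cases q) auto
    have "reaches (build nq upd n (upd s (answer b x y r)) {r'\<in>Y. answer b x y r' = answer b x y r}) r
        (pth nq upd n (upd s (answer b x y r)) r)" using Suc by auto
    then show ?thesis using Some q Suc.prems by (auto intro!: reaches.intros(2))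
  qed
qed

lemma build_leaf: "leaf_path (build nq upd n s Y) ps \<Longrightarrow> Y \<noteq> {} \<Longrightarrow> \<exists>r\<in>Y. pth nq upd n s r = ps"
proof (induction n arbitrary: s Y ps)
  case 0 then show ?case by (auto elim: leaf_path.cases)
next
  case (Suc n)
  show ?case
  proof (cases "nq s")
    case None then show ?thesis using Suc.prems by (auto elim: leaf_path.cases)
  next
    case (Some q)
    obtain b x y where q: "q = (b, x, y)" by (cases q) auto
    define ch where "ch = (\<lambda>v. if v \<in> (\<lambda>r. answer b x y r) ` Y
        then Some (build nq upd n (upd s v) {r\<in>Y. answer b x y r = v}) else None)"
    have bq: "build nq upd (Suc n) s Y = Query b x y ch" using Some q by (simp add: ch_def)
    have "leaf_path (Query b x y ch) ps" using Suc.prems(1) unfolding bq .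
    then obtain v t ps' where ps: "ps = v # ps'" and cv: "ch v = Some t" and lt: "leaf_path t ps'"
      by (cases rule: leaf_path.cases) auto
    from cv have vi: "v \<in> (\<lambda>r. answer b x y r) ` Y" and
      tt: "t = build nq upd n (upd s v) {r\<in>Y. answer b x y r = v}"
      by (auto simp: ch_def split: if_splits)
    from vi obtain r0 where r0: "r0 \<in> Y" "answer b x y r0 = v" by auto
    have lp: "leaf_path (build nq upd n (upd s v) {r\<in>Y. answer b x y r = v}) ps'" using lt tt by simp
    have ne: "{r\<in>Y. answer b x y r = v} \<noteq> {}" using r0 by blast
    from Suc.IH[OF lp ne] obtain r where "r \<in> {r\<in>Y. answer b x y r = v}" "pth nq upd n (upd s v) r = ps'"
      by blast
    then have rY: "r \<in> Y" "answer b x y r = v" "pth nq upd n (upd s v) r = ps'" by auto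
    have "pth nq upd (Suc n) s r = answer b x y r # pth nq upd n (upd s (answer b x y r)) r"
      using Some q by simp
    then have "pth nq upd (Suc n) s r = ps" using rY ps by simp
    then show ?thesis using rY(1) by blast
  qed
qed

lemma run_two:
  assumes "pth nq upd n s r1 = pth nq upd n s r2" and "P s"
    and step: "\<And>s b x y. P s \<Longrightarrow> nq s = Some (b, x, y) \<Longrightarrow> answer b x y r1 = answer b x y r2 \<Longrightarrow> P (upd s (answer b x y r1))"
  shows "P (endst nq upd n s r1) \<and> endst nq upd n s r1 = endst nq upd n s r2"
  using assms(1,2)
proof (induction n arbitrary: s)
  case 0 then show ?case by simp
next
  case (Suc n)
  show ?case
  proof (cases "nq s")
    case None then show ?thesis using Suc by simp
  next
    case (Some q)
    obtain b x y where q: "q = (b, x, y)" by (cases q) auto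
    from Suc.prems Some q have e: "answer b x y r1 = answer b x y r2"
      and e2: "pth nq upd n (upd s (answer b x y r1)) r1 = pth nq upd n (upd s (answer b x y r1)) r2" by auto
    have "P (upd s (answer b x y r1))" using step[OF Suc.prems(2) Some[unfolded q] e] .
    from Suc.IH[OF e2 this] have IH: "P (endst nq upd n (upd s (answer b x y r1)) r1)"
      "endst nq upd n (upd s (answer b x y r1)) r1 = endst nq upd n (upd s (answer b x y r1)) r2" by auto
    have f1: "endst nq upd (Suc n) s r1 = endst nq upd n (upd s (answer b x y r1)) r1" using Some q by simp
    have f2: "endst nq upd (Suc n) s r2 = endst nq upd n (upd s (answer b x y r1)) r2" using Some q e by simp
    show ?thesis unfolding f1 f2 using IH by simp
  qed
qed

lemma run_one:
  assumes "I s"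
    and step: "\<And>s b x y. I s \<Longrightarrow> nq s = Some (b, x, y) \<Longrightarrow> I (upd s (answer b x y r)) \<and> mu (upd s (answer b x y r)) < (mu s :: nat)"
  shows "length (pth nq upd n s r) \<le> mu s \<and> (mu s \<le> n \<longrightarrow> nq (endst nq upd n s r) = None) \<and> I (endst nq upd n s r)"
  using assms(1)
proof (induction n arbitrary: s)
  case 0
  have "mu s \<le> 0 \<longrightarrow> nq s = None"
  proof
    assume "mu s \<le> 0"
    show "nq s = None"
    proof (rule ccontr)
      assume "nq s \<noteq> None" then obtain b x y where "nq s = Some (b, x, y)" by auto
      from step[OF 0 this] \<open>mu s \<le> 0\<close> show False by simp
    qed
  qed
  then show ?case using 0 by simp
next
  case (Suc n)
  show ?case
  proof (cases "nq s")
    case None then show ?thesis using Suc by simp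
  next
    case (Some q)
    obtain b x y where q: "q = (b, x, y)" by (cases q) auto
    from step[OF Suc.prems Some[unfolded q]] have st: "I (upd s (answer b x y r))" "mu (upd s (answer b x y r)) < mu s" by auto
    define s' where "s' = upd s (answer b x y r)"
    from Suc.IH[OF st(1)] have A: "length (pth nq upd n s' r) \<le> mu s'"
      and B: "mu s' \<le> n \<longrightarrow> nq (endst nq upd n s' r) = None" and C: "I (endst nq upd n s' r)"
      unfolding s'_def by blast+
    have e1: "pth nq upd (Suc n) s r = answer b x y r # pth nq upd n s' r" using Some q by (simp add: s'_def)
    have e2: "endst nq upd (Suc n) s r = endst nq upd n s' r" using Some q by (simp add: s'_def)
    have m: "mu s' < mu s" using st(2) by (simp add: s'_def)
    have L: "length (answer b x y r # pth nq upd n s' r) \<le> mu s" using A m by simp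
    have M: "mu s \<le> Suc n \<longrightarrow> nq (endst nq upd n s' r) = None" using B m by auto
    show ?thesis unfolding e1 e2 using L M C by (intro conjI)
  qed
qed



datatype 'a st = Cyc "'a list" | Ext "'a list" "'a list" 'a "'a list" | Mul "'a list" nat | Done "'a list"

definition newst :: "'a list \<Rightarrow> 'a list \<Rightarrow> 'a st" where
  "newst Hl gens = (if set Hl = UNIV then (if gens = [] then Done [] else Mul gens 0)
     else (let g = (SOME g. g \<notin> set Hl) in Ext gens Hl g [g]))"

fun nq :: "'a st \<Rightarrow> (bool \<times> 'a \<times> 'a) option" where
  "nq (Cyc C) = Some (True, last C, hd C)"
| "nq (Ext gens Hl g W) = Some (True, (if length W < length Hl then Hl ! length W else W ! (length W - length Hl)), g)"
| "nq (Mul gens k) = Some (False, fst (List.product gens gens ! k), snd (List.product gens gens ! k))"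
| "nq (Done gens) = None"

fun upd :: "'a st \<Rightarrow> 'a \<Rightarrow> 'a st" where
  "upd (Cyc C) a = (if a \<in> set C then newst (last C # butlast C) (if length C = 1 then [] else [hd C]) else Cyc (C @ [a]))"
| "upd (Ext gens Hl g W) a = (if length W mod length Hl = 0 \<and> a \<in> set Hl then newst (Hl @ W) (gens @ [g]) else Ext gens Hl g (W @ [a]))"
| "upd (Mul gens k) a = (if Suc k < length (List.product gens gens) then Mul gens (Suc k) else Done gens)"
| "upd (Done gens) a = Done gens"

fun mu :: "nat \<Rightarrow> nat \<Rightarrow> 'a st \<Rightarrow> nat" where
  "mu n B (Cyc C) = n + B + 1 - length C"
| "mu n B (Ext gens Hl g W) = n + B + 1 - (length Hl + length W)"
| "mu n B (Mul gens k) = length gens * length gens - k"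
| "mu n B (Done gens) = 0"

fun Inv :: "('a::finite \<Rightarrow> 'a \<Rightarrow> 'a) \<Rightarrow> 'a \<Rightarrow> 'a st \<Rightarrow> bool" where
  "Inv p z (Cyc C) = (C \<noteq> [] \<and> distinct C \<and> (\<forall>i<length C. C!i = nm p z (Suc i) (hd C)))"
| "Inv p z (Ext gens Hl g W) = (Hl \<noteq> [] \<and> hd Hl = z \<and> distinct Hl \<and> (\<forall>x\<in>set Hl. \<forall>y\<in>set Hl. p x y \<in> set Hl) \<and> g \<notin> set Hl \<and> W \<noteq> [] \<and>
     (\<forall>q<length W. W!q = p (Hl!(q mod length Hl)) (nm p z (q div length Hl + 1) g)) \<and> distinct (Hl@W) \<and>
     (\<forall>d. 1 \<le> d \<and> d \<le> (length W - 1) div length Hl + 1 \<longrightarrow> nm p z d g \<notin> set Hl) \<and>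
     2^length gens \<le> length Hl \<and> set Hl \<subseteq> cl p z (set gens))"
| "Inv p z (Mul gens k) = (cl p z (set gens) = UNIV \<and> k < length gens * length gens \<and> 2^length gens \<le> card (UNIV::'a set))"
| "Inv p z (Done gens) = (cl p z (set gens) = UNIV)"

definition HS :: "('a::finite \<Rightarrow> 'a \<Rightarrow> 'a) \<Rightarrow> 'a \<Rightarrow> 'a list \<Rightarrow> 'a list \<Rightarrow> bool" where
  "HS p z Hl gens = (Hl \<noteq> [] \<and> hd Hl = z \<and> distinct Hl \<and> (\<forall>x\<in>set Hl. \<forall>y\<in>set Hl. p x y \<in> set Hl) \<and>
     2^length gens \<le> length Hl \<and> set Hl \<subseteq> cl p z (set gens))"

lemma dl: "distinct (xs :: ('a::finite) list) \<Longrightarrow> length xs \<le> card (UNIV :: 'a set)"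
  by (metis card_mono distinct_card finite_UNIV subset_UNIV)

context agrp begin

lemma newst_inv:
  assumes hs: "HS p z Hl gens" and hB: "\<forall>k. 2^k \<le> card (UNIV::'a set) \<longrightarrow> k*k \<le> B"
  shows "Inv p z (newst Hl gens) \<and> mu (card (UNIV::'a set)) B (newst Hl gens) \<le> card (UNIV::'a set) + B - length Hl"
proof -
  let ?n = "card (UNIV::'a set)"
  from hs have ne: "Hl \<noteq> []" and hd: "hd Hl = z" and dH: "distinct Hl"
    and cH: "\<forall>x\<in>set Hl. \<forall>y\<in>set Hl. p x y \<in> set Hl" and gl: "2^length gens \<le> length Hl"
    and cl: "set Hl \<subseteq> cl p z (set gens)" unfolding HS_def by auto
  have ln: "length Hl \<le> ?n" using dl[OF dH] .
  show ?thesis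
  proof (cases "set Hl = UNIV")
    case True
    then have cU: "cl p z (set gens) = UNIV" using cl by auto
    have "length gens * length gens \<le> B" using hB gl ln by auto
    then show ?thesis using True cU gl ln by (auto simp: newst_def)
  next
    case False
    define g where "g = (SOME g. g \<notin> set Hl)"
    have g: "g \<notin> set Hl" using False unfolding g_def by (metis (mono_tags) UNIV_eq_I someI_ex)
    have h0: "Hl ! 0 = z" using ne hd by (simp add: hd_conv_nth)
    have e: "\<forall>q<length [g]. [g]!q = p (Hl!(q mod length Hl)) (N (q div length Hl + 1) g)"
      using h0 ne by (simp add: nm_Suc)
    have d1: "\<forall>d. 1 \<le> d \<and> d \<le> (length [g] - 1) div length Hl + 1 \<longrightarrow> N d g \<notin> set Hl"
    proof (intro allI impI)
      fix d assume "1 \<le> d \<and> d \<le> (length [g] - 1) div length Hl + 1"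
      then have "d = 1" by simp
      then show "N d g \<notin> set Hl" using g by simp
    qed
    have "Inv p z (Ext gens Hl g [g])"
      using ne hd dH cH g gl cl e d1 by (simp only: Inv.simps) simp
    moreover have "newst Hl gens = Ext gens Hl g [g]" using False by (simp add: newst_def g_def Let_def)
    ultimately show ?thesis by simp
  qed
qed

lemma cyc_step:
  assumes inv: "Inv p z (Cyc C)" and a: "a = p (last C) (hd C)"
    and hB: "\<forall>k. 2^k \<le> card (UNIV::'a set) \<longrightarrow> k*k \<le> B"
  shows "Inv p z (upd (Cyc C) a) \<and> mu (card (UNIV::'a set)) B (upd (Cyc C) a) < mu (card (UNIV::'a set)) B (Cyc C)"
proof -
  let ?n = "card (UNIV::'a set)"
  define g where "g = hd C"
  define j where "j = length C"
  from inv have ne: "C \<noteq> []" and dC: "distinct C" and Ci: "\<And>i. i < j \<Longrightarrow> C!i = N (Suc i) g"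
    unfolding g_def j_def by auto
  have j0: "j > 0" using ne j_def by simp
  have lastC: "last C = N j g" using Ci[of "j - 1"] j0 ne by (simp add: last_conv_nth j_def)
  have aN: "a = N (Suc j) g" using a lastC by (simp add: nm_Suc g_def)
  have jn: "j \<le> ?n" using dl[OF dC] j_def by simp
  show ?thesis
  proof (cases "a \<in> set C")
    case True
    then obtain i where i: "i < j" "C!i = a" by (auto simp: in_set_conv_nth j_def)
    have i0: "i = 0"
    proof (rule ccontr)
      assume "i \<noteq> 0"
      then have "N (Suc i) g = p (N i g) g" "N (Suc j) g = p (N j g) g" by (simp_all add: nm_Suc)
      with i aN Ci have "p (N i g) g = p (N j g) g" by auto
      then have "N i g = N j g" by (rule cancel_r)
      then have "C!(i - 1) = C!(j - 1)" using Ci[of "i - 1"] Ci[of "j - 1"] \<open>i \<noteq> 0\<close> i j0 by simp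
      then have "i - 1 = j - 1" using dC i j0 by (simp add: nth_eq_iff_index_eq j_def)
      then show False using i \<open>i \<noteq> 0\<close> by simp
    qed
    have "p z g = p (N j g) g" using i i0 aN Ci[of 0] j0 by (simp add: nm_Suc)
    then have zj: "N j g = z" by (rule cancel_r[symmetric])
    have setC: "set C = range (\<lambda>k. N k g)"
    proof
      show "set C \<subseteq> range (\<lambda>k. N k g)" using Ci by (auto simp: in_set_conv_nth j_def)
    next
      show "range (\<lambda>k. N k g) \<subseteq> set C"
      proof
        fix x assume "x \<in> range (\<lambda>k. N k g)"
        then obtain k where x: "x = N k g" by auto
        have xm: "x = N (k mod j) g" using x nm_mod[OF zj] by simp
        show "x \<in> set C"
        proof (cases "k mod j = 0")
          case True
          then have "x = C!(j - 1)" using xm zj Ci[of "j - 1"] j0 by simp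
          then show ?thesis using j0 j_def by simp
        next
          case False
          then have "x = C!(k mod j - 1)" using xm Ci[of "k mod j - 1"] j0 mod_less_divisor[OF j0, of k] by simp
          moreover have "k mod j - 1 < length C" using j0 j_def by (simp add: less_imp_diff_less)
          ultimately show ?thesis by simp
        qed
      qed
    qed
    define Hl where "Hl = last C # butlast C"
    define gens where "gens = (if length C = 1 then [] else [hd C])"
    have sH: "set Hl = set C" using ne unfolding Hl_def by (metis append_butlast_last_id list.simps(15) set_append Un_commute empty_set set_simps(2) insert_is_Un)
    have dH: "distinct Hl"
    proof -
      have "distinct (butlast C @ [last C])" using dC ne by (simp add: append_butlast_last_id)
      then show ?thesis unfolding Hl_def by auto
    qed
    have lH: "length Hl = j" using ne unfolding Hl_def j_def by simp
    have hs: "HS p z Hl gens"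
      unfolding HS_def
    proof (intro conjI)
      show "Hl \<noteq> []" "hd Hl = z" "distinct Hl" using lastC zj dH by (auto simp: Hl_def)
      show "\<forall>x\<in>set Hl. \<forall>y\<in>set Hl. p x y \<in> set Hl" unfolding sH setC by (auto simp: nm_add[symmetric])
      show "2 ^ length gens \<le> length Hl"
      proof (cases "j = 1")
        case True then show ?thesis using lH by (simp add: gens_def j_def)
      next
        case False then have "j \<ge> 2" using j0 by simp
        then show ?thesis using lH False by (simp add: gens_def j_def)
      qed
      show "set Hl \<subseteq> cl p z (set gens)"
      proof
        fix x assume "x \<in> set Hl"
        then obtain k where x: "x = N k g" unfolding sH setC by auto
        show "x \<in> cl p z (set gens)"
        proof (cases "j = 1")
          case True
          then have "x = z" using x nm_mod[OF zj, of k] by simp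
          then show ?thesis by (simp add: cl.intros)
        next
          case False
          then have "g \<in> cl p z (set gens)" by (simp add: gens_def g_def j_def cl.intros)
          then show ?thesis unfolding x by (rule cl_nm)
        qed
      qed
    qed
    have up: "upd (Cyc C) a = newst Hl gens" using True by (simp add: Hl_def gens_def)
    from newst_inv[OF hs hB] have I: "Inv p z (newst Hl gens)" and X: "mu ?n B (newst Hl gens) \<le> ?n + B - length Hl" by auto
    have "mu ?n B (newst Hl gens) < mu ?n B (Cyc C)" using X lH jn j_def by simp
    then show ?thesis unfolding up using I by simp
  next
    case False
    have "Inv p z (Cyc (C @ [a]))"
    proof -
      have "\<forall>i<length (C @ [a]). (C @ [a])!i = N (Suc i) (hd (C @ [a]))"
      proof (intro allI impI)
        fix i assume "i < length (C @ [a])"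
        then have "i < j \<or> i = j" by (auto simp: j_def)
        then show "(C @ [a])!i = N (Suc i) (hd (C @ [a]))"
          using Ci aN ne by (auto simp: nth_append j_def g_def)
      qed
      then show ?thesis using False dC ne by simp
    qed
    moreover have "length (C @ [a]) \<le> ?n" using dl[of "C @ [a]"] False dC by simp
    ultimately show ?thesis using False j_def by simp
  qed
qed

end


lemma div_pred: "0 < (L::nat) \<Longrightarrow> L div r = (if L mod r = 0 then Suc ((L - 1) div r) else (L - 1) div r)"
  using div_Suc[of "L - 1" r] by simp

context agrp begin

lemma ext_query:
  assumes "r = length Hl" "L = length W" "r > 0"
    and Wq: "\<forall>q<length W. W!q = p (Hl!(q mod length Hl)) (N (q div length Hl + 1) g)"
  shows "(if L < r then Hl ! L else W ! (L - r)) = p (Hl!(L mod r)) (N (L div r) g)"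
proof (cases "L < r")
  case True then show ?thesis by simp
next
  case False
  have "L - r < L" using False \<open>r > 0\<close> by linarith
  then have "L - r < length W" using assms by simp
  then have "W ! (L - r) = p (Hl!((L - r) mod r)) (N ((L - r) div r + 1) g)" using Wq assms by simp
  moreover have "(L - r) mod r = L mod r" using False le_mod_geq[of r L] by simp
  moreover have "(L - r) div r + 1 = L div r" using False le_div_geq[of r L] assms by simp
  ultimately show ?thesis using False by simp
qed

lemma ext_step:
  assumes inv: "Inv p z (Ext gens Hl g W)"
    and a: "a = p (if length W < length Hl then Hl ! length W else W ! (length W - length Hl)) g"
    and hB: "\<forall>k. 2^k \<le> card (UNIV::'a set) \<longrightarrow> k*k \<le> B"
  shows "Inv p z (upd (Ext gens Hl g W) a) \<and> mu (card (UNIV::'a set)) B (upd (Ext gens Hl g W) a) < mu (card (UNIV::'a set)) B (Ext gens Hl g W)"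
proof -
  let ?n = "card (UNIV::'a set)"
  define r where "r = length Hl"
  define L where "L = length W"
  define S where "S = set Hl"
  from inv have ne: "Hl \<noteq> []" and hd: "hd Hl = z" and dH: "distinct Hl"
    and cS: "\<forall>x\<in>S. \<forall>y\<in>S. p x y \<in> S" and gS: "g \<notin> S" and Wne: "W \<noteq> []"
    and Wq: "\<forall>q<length W. W!q = p (Hl!(q mod length Hl)) (N (q div length Hl + 1) g)"
    and dHW: "distinct (Hl @ W)"
    and E5: "\<forall>d. 1 \<le> d \<and> d \<le> (L - 1) div r + 1 \<longrightarrow> N d g \<notin> S"
    and gl: "2^length gens \<le> r" and clH: "S \<subseteq> cl p z (set gens)"
    unfolding S_def r_def L_def by auto
  have r0: "r > 0" using ne r_def by simp
  have L0: "L > 0" using Wne L_def by simp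
  have h0: "Hl ! 0 = z" using ne hd by (simp add: hd_conv_nth)
  have zS: "z \<in> S" using ne hd S_def by auto
  have WqL: "\<And>q. q < L \<Longrightarrow> W!q = p (Hl!(q mod r)) (N (q div r + 1) g)" using Wq r_def L_def by simp
  define i where "i = L mod r"
  define k where "k = L div r"
  have ir: "i < r" using r0 i_def by simp
  have HiS: "Hl ! i \<in> S" using ir r_def S_def by simp
  have xrep: "(if length W < length Hl then Hl ! length W else W ! (length W - length Hl)) = p (Hl!i) (N k g)"
    using ext_query[OF refl refl _ Wq] r0 unfolding i_def k_def r_def L_def by simp
  have arep: "a = p (Hl!i) (N (Suc k) g)" using a xrep by (simp add: assoc nm_Suc)
  have lHW: "length (Hl @ W) \<le> ?n" using dl[OF dHW] .
  show ?thesis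
  proof (cases "L mod r = 0 \<and> a \<in> S")
    case True
    define j where "j = L div r"
    have Lj: "L = j * r"
    proof -
      have "j * r + L mod r = L" unfolding j_def by (rule div_mult_mod_eq)
      then show ?thesis using True by simp
    qed
    have j1: "j \<ge> 1" using Lj L0 by (cases j) auto
    have c: "a = N (Suc j) g" using arep True h0 i_def k_def j_def by simp
    have cS': "N (Suc j) g \<in> S" using c True by simp
    have mem: "\<And>y. y \<in> set Hl \<union> set W \<longleftrightarrow> (\<exists>h\<in>S. \<exists>k'\<le>j. y = p h (N k' g))"
    proof
      fix y assume "y \<in> set Hl \<union> set W"
      then show "\<exists>h\<in>S. \<exists>k'\<le>j. y = p h (N k' g)"
      proof
        assume "y \<in> set Hl" then show ?thesis using S_def by (intro bexI[of _ y] exI[of _ 0]) auto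
      next
        assume "y \<in> set W"
        then obtain q where q: "q < L" "y = W!q" by (auto simp: in_set_conv_nth L_def)
        have "q div r < j" using q Lj by (simp add: less_mult_imp_div_less)
        moreover have "Hl!(q mod r) \<in> S" using r0 r_def S_def by simp
        ultimately show ?thesis using WqL[OF q(1)] q(2) by (intro bexI[of _ "Hl!(q mod r)"] exI[of _ "q div r + 1"]) auto
      qed
    next
      fix y assume "\<exists>h\<in>S. \<exists>k'\<le>j. y = p h (N k' g)"
      then obtain h k' where h: "h \<in> S" "k' \<le> j" "y = p h (N k' g)" by blast
      show "y \<in> set Hl \<union> set W"
      proof (cases "k' = 0")
        case True then show ?thesis using h S_def by simp
      next
        case False
        obtain i' where i': "i' < r" "Hl!i' = h" using h(1) by (auto simp: S_def r_def in_set_conv_nth)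
        define q where "q = (k' - 1) * r + i'"
        have "q < k' * r" using i' False unfolding q_def by (cases k') auto
        also have "\<dots> \<le> j * r" using h(2) by simp
        finally have qL: "q < L" using Lj by simp
        have "q mod r = i'" "q div r = k' - 1" using i' r0 unfolding q_def by simp_all
        then have "W!q = y" using WqL[OF qL] i' h False by simp
        then show ?thesis using qL L_def by (metis UnI2 nth_mem)
      qed
    qed
    have dec: "\<And>h h' k1 k2. p (p h (N k1 g)) (p h' (N k2 g)) = p (p h h') (N (k1 + k2) g)"
      by (simp add: nm_add ac)
    have closed: "\<forall>x\<in>set (Hl @ W). \<forall>y\<in>set (Hl @ W). p x y \<in> set (Hl @ W)"
    proof (intro ballI)
      fix u v assume "u \<in> set (Hl @ W)" "v \<in> set (Hl @ W)"
      then obtain h1 k1 h2 k2 where u: "h1 \<in> S" "k1 \<le> j" "u = p h1 (N k1 g)"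
        and v: "h2 \<in> S" "k2 \<le> j" "v = p h2 (N k2 g)" using mem by (metis set_append)
      have hh: "p h1 h2 \<in> S" using cS u v by simp
      have "\<exists>h\<in>S. \<exists>k'\<le>j. p u v = p h (N k' g)"
      proof (cases "k1 + k2 \<le> j")
        case True then show ?thesis using u v hh dec by blast
      next
        case False
        define t where "t = k1 + k2 - Suc j"
        have st: "k1 + k2 = Suc j + t" using False t_def by simp
        have "N (k1 + k2) g = p (N (Suc j) g) (N t g)" unfolding st by (rule nm_add)
        then have "p u v = p (p (p h1 h2) (N (Suc j) g)) (N t g)" using u v dec by (simp add: assoc)
        moreover have "p (p h1 h2) (N (Suc j) g) \<in> S" using cS hh cS' by simp
        moreover have "t \<le> j" using u v unfolding t_def by simp
        ultimately show ?thesis by blast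
      qed
      then show "p u v \<in> set (Hl @ W)" using mem by (metis set_append)
    qed
    have gcl: "g \<in> cl p z (set (gens @ [g]))" by (simp add: cl.intros)
    have clHW: "set (Hl @ W) \<subseteq> cl p z (set (gens @ [g]))"
    proof
      fix y assume "y \<in> set (Hl @ W)"
      then obtain h k' where h: "h \<in> S" "y = p h (N k' g)" using mem by (metis set_append)
      have "h \<in> cl p z (set (gens @ [g]))" using clH h(1) cl_mono[of h p z "set gens" "set (gens @ [g])"] by auto
      then show "y \<in> cl p z (set (gens @ [g]))" using h(2) cl_nm[OF gcl] by (simp add: cl.intros)
    qed
    have "L \<ge> r" using Lj j1 by simp
    then have gl2: "2 ^ length (gens @ [g]) \<le> length (Hl @ W)" using gl r_def L_def by simp
    have hs: "HS p z (Hl @ W) (gens @ [g])"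
      unfolding HS_def using ne hd dHW closed gl2 clHW by simp
    have up: "upd (Ext gens Hl g W) a = newst (Hl @ W) (gens @ [g])" using True r_def L_def S_def by simp
    from newst_inv[OF hs hB] have I: "Inv p z (newst (Hl @ W) (gens @ [g]))"
      and X: "mu ?n B (newst (Hl @ W) (gens @ [g])) \<le> ?n + B - length (Hl @ W)" by auto
    have "mu ?n B (newst (Hl @ W) (gens @ [g])) < mu ?n B (Ext gens Hl g W)" using X lHW by simp
    then show ?thesis unfolding up using I by simp
  next
    case False
    have kdiv: "k \<le> (L - 1) div r + 1" using div_pred[OF L0, of r] k_def by (simp split: if_splits)
    have aS: "a \<notin> S"
    proof
      assume aS: "a \<in> S"
      then have "L mod r \<noteq> 0" using False by simp
      then have kk: "k = (L - 1) div r" using div_pred[OF L0, of r] k_def by simp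
      have "N (Suc k) g \<in> S" using sub_cancel[OF cS zS HiS aS] arep by simp
      then show False using E5 kk by auto
    qed
    have aW: "a \<notin> set W"
    proof
      assume "a \<in> set W"
      then obtain q' where q': "q' < L" "W!q' = a" by (auto simp: in_set_conv_nth L_def)
      define i' where "i' = q' mod r"
      define k' where "k' = q' div r"
      have a2: "a = p (Hl!i') (N (Suc k') g)" using WqL[OF q'(1)] q'(2) by (simp add: i'_def k'_def)
      have Hi'S: "Hl!i' \<in> S" using r0 i'_def r_def S_def by simp
      have kk': "k' \<le> k" using q' unfolding k'_def k_def by (simp add: div_le_mono)
      show False
      proof (cases "k' = k")
        case True
        have "q' = k' * r + i'" "L = k * r + i" unfolding i'_def k'_def k_def i_def by simp_all
        then have "i' < i" using q'(1) True by simp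
        have "Hl!i = Hl!i'" using arep a2 True by (metis cancel_r)
        then have "i = i'" using dH ir \<open>i' < i\<close> r_def by (simp add: nth_eq_iff_index_eq)
        then show False using \<open>i' < i\<close> by simp
      next
        case False
        then have lt: "k' < k" using kk' by simp
        have "N (Suc k) g = p (N (Suc k') g) (N (k - k') g)" using lt by (simp add: nm_add[symmetric])
        then have "p (N (Suc k') g) (p (Hl!i) (N (k - k') g)) = p (N (Suc k') g) (Hl!i')"
          using arep a2 by (simp add: ac)
        then have "p (Hl!i) (N (k - k') g) = Hl!i'" by (rule cancel)
        then have "N (k - k') g \<in> S" using sub_cancel[OF cS zS HiS Hi'S] by simp
        moreover have "1 \<le> k - k'" "k - k' \<le> (L - 1) div r + 1" using lt kdiv by simp_all
        ultimately show False using E5 by auto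
      qed
    qed
    have E5': "\<forall>d. 1 \<le> d \<and> d \<le> (length (W @ [a]) - 1) div r + 1 \<longrightarrow> N d g \<notin> S"
    proof (intro allI impI)
      fix d assume d: "1 \<le> d \<and> d \<le> (length (W @ [a]) - 1) div r + 1"
      then have d': "d \<le> k + 1" using L_def k_def by simp
      show "N d g \<notin> S"
      proof (cases "L mod r = 0")
        case True
        then have kk: "k = Suc ((L - 1) div r)" using div_pred[OF L0, of r] k_def by simp
        show ?thesis
        proof (cases "d = k + 1")
          case True
          have "a = N (Suc k) g" using arep h0 \<open>L mod r = 0\<close> i_def by simp
          then show ?thesis using aS True by simp
        next
          case False then show ?thesis using E5 d d' kk by auto
        qed
      next
        case False
        then have "k = (L - 1) div r" using div_pred[OF L0, of r] k_def by simp
        then show ?thesis using E5 d d' by auto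
      qed
    qed
    have Wq': "\<forall>q<length (W @ [a]). (W @ [a])!q = p (Hl!(q mod length Hl)) (N (q div length Hl + 1) g)"
    proof (intro allI impI)
      fix q assume "q < length (W @ [a])"
      then have "q < L \<or> q = L" using L_def by auto
      then show "(W @ [a])!q = p (Hl!(q mod length Hl)) (N (q div length Hl + 1) g)"
        using WqL arep i_def k_def r_def L_def by (auto simp: nth_append)
    qed
    have dHW': "distinct (Hl @ W @ [a])" using dHW aS aW S_def by auto
    have I: "Inv p z (Ext gens Hl g (W @ [a]))"
      using ne hd dH cS gS Wq' dHW' E5' gl clH unfolding S_def r_def by (simp only: Inv.simps) simp
    have up: "upd (Ext gens Hl g W) a = Ext gens Hl g (W @ [a])" using False r_def L_def S_def by auto
    have "length (Hl @ W @ [a]) \<le> ?n" using dl[OF dHW'] .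
    then show ?thesis unfolding up using I by simp
  qed
qed

end


fun Ag :: "('a \<Rightarrow> 'a \<Rightarrow> 'a) \<Rightarrow> ('a \<Rightarrow> 'a \<Rightarrow> 'a) \<Rightarrow> ('a \<Rightarrow> 'a \<Rightarrow> 'a) \<Rightarrow> ('a \<Rightarrow> 'a \<Rightarrow> 'a) \<Rightarrow> 'a st \<Rightarrow> bool" where
  "Ag p1 m1 p2 m2 (Cyc C) = True"
| "Ag p1 m1 p2 m2 (Ext gens Hl g W) = (\<forall>x\<in>set Hl. \<forall>y\<in>set Hl. p1 x y = p2 x y)"
| "Ag p1 m1 p2 m2 (Mul gens k) = (p1 = p2 \<and> (\<forall>i<k. m1 (fst (List.product gens gens ! i)) (snd (List.product gens gens ! i))
      = m2 (fst (List.product gens gens ! i)) (snd (List.product gens gens ! i))))"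
| "Ag p1 m1 p2 m2 (Done gens) = (p1 = p2 \<and> (\<forall>x\<in>set gens. \<forall>y\<in>set gens. m1 x y = m2 x y))"

lemma newst_ag: "\<forall>x\<in>set Hl. \<forall>y\<in>set Hl. p1 x y = p2 x y \<Longrightarrow> Ag p1 m1 p2 m2 (newst Hl gens)"
  by (auto simp: newst_def Let_def fun_eq_iff)

context agrp begin

lemma cyc_fin:
  assumes inv: "Inv p z (Cyc C)" and a: "a = p (last C) (hd C)" and aC: "a \<in> set C"
  shows "N (length C) (hd C) = z"
proof -
  define g where "g = hd C"
  define j where "j = length C"
  from inv have ne: "C \<noteq> []" and dC: "distinct C" and Ci: "\<And>i. i < j \<Longrightarrow> C!i = N (Suc i) g"
    unfolding g_def j_def by auto
  have j0: "j > 0" using ne j_def by simp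
  have lastC: "last C = N j g" using Ci[of "j - 1"] j0 ne by (simp add: last_conv_nth j_def)
  have aN: "a = N (Suc j) g" using a lastC by (simp add: nm_Suc g_def)
  obtain i where i: "i < j" "C!i = a" using aC by (auto simp: in_set_conv_nth j_def)
  have i0: "i = 0"
  proof (rule ccontr)
    assume "i \<noteq> 0"
    then have "N (Suc i) g = p (N i g) g" "N (Suc j) g = p (N j g) g" by (simp_all add: nm_Suc)
    with i aN Ci have "p (N i g) g = p (N j g) g" by auto
    then have "N i g = N j g" by (rule cancel_r)
    then have "C!(i - 1) = C!(j - 1)" using Ci[of "i - 1"] Ci[of "j - 1"] \<open>i \<noteq> 0\<close> i j0 by simp
    then have "i - 1 = j - 1" using dC i j0 by (simp add: nth_eq_iff_index_eq j_def)
    then show False using i \<open>i \<noteq> 0\<close> by simp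
  qed
  have "p z g = p (N j g) g" using i i0 aN Ci[of 0] j0 by (simp add: nm_Suc)
  then have "N j g = z" by (rule cancel_r[symmetric])
  then show ?thesis by (simp add: g_def j_def)
qed

lemma ext_fin_mem:
  assumes inv: "Inv p z (Ext gens Hl g W)" and fin: "length W mod length Hl = 0"
  shows "y \<in> set Hl \<union> set W \<longleftrightarrow> (\<exists>h\<in>set Hl. \<exists>k'\<le>length W div length Hl. y = p h (N k' g))"
proof -
  define r where "r = length Hl"
  define L where "L = length W"
  define S where "S = set Hl"
  define j where "j = L div r"
  from inv have ne: "Hl \<noteq> []" and Wne: "W \<noteq> []"
    and Wq: "\<forall>q<length W. W!q = p (Hl!(q mod length Hl)) (N (q div length Hl + 1) g)"
    unfolding S_def r_def L_def by auto
  have r0: "r > 0" using ne r_def by simp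
  have WqL: "\<And>q. q < L \<Longrightarrow> W!q = p (Hl!(q mod r)) (N (q div r + 1) g)" using Wq r_def L_def by simp
  have Lj: "L = j * r"
  proof -
    have "j * r + L mod r = L" unfolding j_def by (rule div_mult_mod_eq)
    then show ?thesis using fin r_def L_def by simp
  qed
  have "y \<in> set Hl \<union> set W \<longleftrightarrow> (\<exists>h\<in>S. \<exists>k'\<le>j. y = p h (N k' g))"
  proof
    assume "y \<in> set Hl \<union> set W"
    then show "\<exists>h\<in>S. \<exists>k'\<le>j. y = p h (N k' g)"
    proof
      assume "y \<in> set Hl" then show ?thesis using S_def by (intro bexI[of _ y] exI[of _ 0]) auto
    next
      assume "y \<in> set W"
      then obtain q where q: "q < L" "y = W!q" by (auto simp: in_set_conv_nth L_def)
      have "q div r < j" using q Lj by (simp add: less_mult_imp_div_less)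
      moreover have "Hl!(q mod r) \<in> S" using r0 r_def S_def by simp
      ultimately show ?thesis using WqL[OF q(1)] q(2) by (intro bexI[of _ "Hl!(q mod r)"] exI[of _ "q div r + 1"]) auto
    qed
  next
    assume "\<exists>h\<in>S. \<exists>k'\<le>j. y = p h (N k' g)"
    then obtain h k' where h: "h \<in> S" "k' \<le> j" "y = p h (N k' g)" by blast
    show "y \<in> set Hl \<union> set W"
    proof (cases "k' = 0")
      case True then show ?thesis using h S_def by simp
    next
      case False
      obtain i' where i': "i' < r" "Hl!i' = h" using h(1) by (auto simp: S_def r_def in_set_conv_nth)
      define q where "q = (k' - 1) * r + i'"
      have "q < k' * r" using i' False unfolding q_def by (cases k') auto
      also have "\<dots> \<le> j * r" using h(2) by simp
      finally have qL: "q < L" using Lj by simp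
      have "q mod r = i'" "q div r = k' - 1" using i' r0 unfolding q_def by simp_all
      then have "W!q = y" using WqL[OF qL] i' h False by simp
      then show ?thesis using qL L_def by (metis UnI2 nth_mem)
    qed
  qed
  then show ?thesis unfolding S_def j_def L_def r_def .
qed

lemma dec: "p (p h (N k1 g)) (p h' (N k2 g)) = p (p h h') (N (k1 + k2) g)"
  by (simp add: nm_add ac)

lemma mul_inv_step:
  assumes "Inv p z (Mul gens k)"
  shows "Inv p z (upd (Mul gens k) a) \<and> mu n B (upd (Mul gens k) a) < mu n B (Mul gens k)"
  using assms by auto

end

lemma cyc_ag:
  assumes A1: "agrp p1 z1" and A2: "agrp p2 z2"
    and I1: "Inv p1 z1 (Cyc C)" and I2: "Inv p2 z2 (Cyc C)"
    and a1: "a = p1 (last C) (hd C)" and a2: "a = p2 (last C) (hd C)"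
  shows "Ag p1 m1 p2 m2 (upd (Cyc C) a)"
proof (cases "a \<in> set C")
  case False then show ?thesis by simp
next
  case True
  define g where "g = hd C"
  define j where "j = length C"
  have z1: "nm p1 z1 j g = z1" using agrp.cyc_fin[OF A1 I1 a1 True] by (simp add: g_def j_def)
  have z2: "nm p2 z2 j g = z2" using agrp.cyc_fin[OF A2 I2 a2 True] by (simp add: g_def j_def)
  from I1 have ne: "C \<noteq> []" and C1: "\<And>i. i < j \<Longrightarrow> C!i = nm p1 z1 (Suc i) g" unfolding g_def j_def by auto
  from I2 have C2: "\<And>i. i < j \<Longrightarrow> C!i = nm p2 z2 (Suc i) g" unfolding g_def j_def by auto
  have j0: "j > 0" using ne j_def by simp
  have zz: "z1 = z2" using z1 z2 C1[of "j - 1"] C2[of "j - 1"] j0 by simp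
  have tt: "\<And>t. t < j \<Longrightarrow> nm p1 z1 t g = nm p2 z2 t g"
  proof -
    fix t assume t: "t < j"
    show "nm p1 z1 t g = nm p2 z2 t g"
    proof (cases t)
      case 0 then show ?thesis using zz by simp
    next
      case (Suc t') then show ?thesis using C1[of t'] C2[of t'] t by simp
    qed
  qed
  have agC: "\<forall>x\<in>set C. \<forall>y\<in>set C. p1 x y = p2 x y"
  proof (intro ballI)
    fix x y assume "x \<in> set C" "y \<in> set C"
    then obtain i i' where ii: "i < j" "x = C!i" "i' < j" "y = C!i'" by (auto simp: in_set_conv_nth j_def)
    define s where "s = Suc i + Suc i'"
    have "p1 x y = nm p1 z1 s g" using ii C1 agrp.nm_add[OF A1, of "Suc i" "Suc i'" g, symmetric] by (simp add: s_def)
    also have "\<dots> = nm p1 z1 (s mod j) g" using agrp.nm_mod[OF A1 z1] .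
    also have "\<dots> = nm p2 z2 (s mod j) g" using tt j0 by simp
    also have "\<dots> = nm p2 z2 s g" using agrp.nm_mod[OF A2 z2] by simp
    also have "\<dots> = p2 x y" using ii C2 agrp.nm_add[OF A2, of "Suc i" "Suc i'" g, symmetric] by (simp add: s_def)
    finally show "p1 x y = p2 x y" .
  qed
  have sH: "set (last C # butlast C) = set C" using ne
    by (metis append_butlast_last_id list.simps(15) set_append Un_commute empty_set set_simps(2) insert_is_Un)
  have up: "upd (Cyc C) a = newst (last C # butlast C) (if length C = 1 then [] else [hd C])" using True by simp
  have "\<forall>x\<in>set (last C # butlast C). \<forall>y\<in>set (last C # butlast C). p1 x y = p2 x y" using agC sH by simp
  from newst_ag[OF this] show ?thesis unfolding up .
qed

lemma ext_ag:
  assumes A1: "agrp p1 z1" and A2: "agrp p2 z2"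
    and I1: "Inv p1 z1 (Ext gens Hl g W)" and I2: "Inv p2 z2 (Ext gens Hl g W)"
    and Ag: "Ag p1 m1 p2 m2 (Ext gens Hl g W)"
    and a1: "a = p1 (if length W < length Hl then Hl ! length W else W ! (length W - length Hl)) g"
    and a2: "a = p2 (if length W < length Hl then Hl ! length W else W ! (length W - length Hl)) g"
  shows "Ag p1 m1 p2 m2 (upd (Ext gens Hl g W) a)"
proof (cases "length W mod length Hl = 0 \<and> a \<in> set Hl")
  case False
  have "upd (Ext gens Hl g W) a = Ext gens Hl g (W @ [a])" using False by auto
  then show ?thesis using Ag by simp
next
  case True
  define r where "r = length Hl"
  define L where "L = length W"
  define S where "S = set Hl"
  define j where "j = L div r"
  from I1 have ne: "Hl \<noteq> []" and hd1: "hd Hl = z1" and cS: "\<forall>x\<in>S. \<forall>y\<in>S. p1 x y \<in> S" and Wne: "W \<noteq> []"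
    and Wq1: "\<forall>q<length W. W!q = p1 (Hl!(q mod length Hl)) (nm p1 z1 (q div length Hl + 1) g)"
    unfolding S_def by auto
  from I2 have hd2: "hd Hl = z2"
    and Wq2: "\<forall>q<length W. W!q = p2 (Hl!(q mod length Hl)) (nm p2 z2 (q div length Hl + 1) g)" by auto
  from Ag have agS: "\<forall>x\<in>S. \<forall>y\<in>S. p1 x y = p2 x y" unfolding S_def by simp
  have zz: "z1 = z2" using hd1 hd2 by simp
  have r0: "r > 0" using ne r_def by simp
  have h0: "Hl ! 0 = z1" using ne hd1 by (simp add: hd_conv_nth)
  have Lm: "L mod r = 0" using True r_def L_def by simp
  have Lj: "L = j * r"
  proof -
    have "j * r + L mod r = L" unfolding j_def by (rule div_mult_mod_eq)
    then show ?thesis using Lm by simp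
  qed
  have x1: "(if length W < length Hl then Hl ! length W else W ! (length W - length Hl)) = p1 (Hl!0) (nm p1 z1 j g)"
    using agrp.ext_query[OF A1 refl refl _ Wq1] r0 Lm unfolding j_def r_def L_def by simp
  have x2: "(if length W < length Hl then Hl ! length W else W ! (length W - length Hl)) = p2 (Hl!0) (nm p2 z2 j g)"
    using agrp.ext_query[OF A2 refl refl _ Wq2] r0 Lm unfolding j_def r_def L_def by simp
  have c1: "a = nm p1 z1 (Suc j) g" using a1 x1 h0 by (simp add: agrp.assoc[OF A1] nm_Suc agrp.lz[OF A1])
  have c2: "a = nm p2 z2 (Suc j) g" using a2 x2 h0 zz by (simp add: agrp.assoc[OF A2] nm_Suc agrp.lz[OF A2])
  have cS': "a \<in> S" using True S_def by simp
  have key: "\<And>h k. h \<in> S \<Longrightarrow> k \<le> j \<Longrightarrow> p1 h (nm p1 z1 k g) = p2 h (nm p2 z2 k g)"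
  proof -
    fix h k assume h: "h \<in> S" and k: "k \<le> j"
    show "p1 h (nm p1 z1 k g) = p2 h (nm p2 z2 k g)"
    proof (cases "k = 0")
      case True then show ?thesis using zz agrp.rz[OF A1] agrp.rz[OF A2] by simp
    next
      case False
      obtain i' where i': "i' < r" "Hl!i' = h" using h by (auto simp: S_def r_def in_set_conv_nth)
      define q where "q = (k - 1) * r + i'"
      have "q < k * r" using i' False unfolding q_def by (cases k) auto
      also have "\<dots> \<le> j * r" using k by simp
      finally have qL: "q < L" using Lj by simp
      have "q mod r = i'" "q div r = k - 1" using i' r0 unfolding q_def by simp_all
      then show ?thesis using Wq1 Wq2 qL i' False unfolding r_def L_def by (metis Suc_diff_1 Suc_eq_plus1 neq0_conv)
    qed
  qed
  have mem: "\<And>y. y \<in> set (Hl @ W) \<longleftrightarrow> (\<exists>h\<in>S. \<exists>k'\<le>j. y = p1 h (nm p1 z1 k' g))"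
    using agrp.ext_fin_mem[OF A1 I1] True unfolding S_def j_def L_def r_def by simp
  have agHW: "\<forall>x\<in>set (Hl @ W). \<forall>y\<in>set (Hl @ W). p1 x y = p2 x y"
  proof (intro ballI)
    fix u v assume "u \<in> set (Hl @ W)" "v \<in> set (Hl @ W)"
    then obtain h1 k1 h2 k2 where u: "h1 \<in> S" "k1 \<le> j" "u = p1 h1 (nm p1 z1 k1 g)"
      and v: "h2 \<in> S" "k2 \<le> j" "v = p1 h2 (nm p1 z1 k2 g)" using mem by blast
    have u2: "u = p2 h1 (nm p2 z2 k1 g)" using u key by simp
    have v2: "v = p2 h2 (nm p2 z2 k2 g)" using v key by simp
    have hh: "p1 h1 h2 \<in> S" "p1 h1 h2 = p2 h1 h2" using cS agS u v by auto
    have e1: "p1 u v = p1 (p1 h1 h2) (nm p1 z1 (k1 + k2) g)" using u v agrp.dec[OF A1] by simp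
    have e2: "p2 u v = p2 (p2 h1 h2) (nm p2 z2 (k1 + k2) g)" using u2 v2 agrp.dec[OF A2] by simp
    show "p1 u v = p2 u v"
    proof (cases "k1 + k2 \<le> j")
      case True then show ?thesis using e1 e2 hh key by simp
    next
      case False
      define t where "t = k1 + k2 - Suc j"
      have st: "k1 + k2 = Suc j + t" using False t_def by simp
      have n1: "nm p1 z1 (Suc j + t) g = p1 a (nm p1 z1 t g)" by (simp only: agrp.nm_add[OF A1] c1[symmetric])
      have n2: "nm p2 z2 (Suc j + t) g = p2 a (nm p2 z2 t g)" by (simp only: agrp.nm_add[OF A2] c2[symmetric])
      have f1: "p1 u v = p1 (p1 (p1 h1 h2) a) (nm p1 z1 t g)"
        using e1 unfolding st n1 by (simp add: agrp.assoc[OF A1])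
      have f2: "p2 u v = p2 (p2 (p2 h1 h2) a) (nm p2 z2 t g)"
        using e2 unfolding st n2 by (simp add: agrp.assoc[OF A2])
      have "p1 (p1 h1 h2) a = p2 (p2 h1 h2) a" using hh agS cS' by simp
      moreover have "p1 (p1 h1 h2) a \<in> S" using hh cS cS' by simp
      moreover have "t \<le> j" using u v t_def by simp
      ultimately show ?thesis using f1 f2 key by simp
    qed
  qed
  have "upd (Ext gens Hl g W) a = newst (Hl @ W) (gens @ [g])" using True by simp
  then show ?thesis using newst_ag[OF agHW] by simp
qed



lemma mul_ag:
  assumes I: "Inv p1 z1 (Mul gens k)" and A: "Ag p1 m1 p2 m2 (Mul gens k)"
    and e: "m1 (fst (List.product gens gens ! k)) (snd (List.product gens gens ! k)) = m2 (fst (List.product gens gens ! k)) (snd (List.product gens gens ! k))"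
  shows "Ag p1 m1 p2 m2 (upd (Mul gens k) a)"
proof (cases "Suc k < length (List.product gens gens)")
  case True
  then show ?thesis using A e by (auto simp: less_Suc_eq)
next
  case False
  have "\<forall>x\<in>set gens. \<forall>y\<in>set gens. m1 x y = m2 x y"
  proof (intro ballI)
    fix x y assume "x \<in> set gens" "y \<in> set gens"
    then have "(x, y) \<in> set (List.product gens gens)" by simp
    then obtain i where i: "i < length (List.product gens gens)" "List.product gens gens ! i = (x, y)"
      by (metis in_set_conv_nth)
    then have "i < k \<or> i = k" using False by auto
    then show "m1 x y = m2 x y" using A e i by (metis Ag.simps(3) fst_conv snd_conv)
  qed
  then show ?thesis using False A by simp
qed

lemma single_step:
  fixes p :: "'a::finite \<Rightarrow> 'a \<Rightarrow> 'a"
  assumes R: "rg p z m" and hB: "\<forall>k. 2^k \<le> card (UNIV::'a set) \<longrightarrow> k*k \<le> B"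
    and I: "Inv p z s" and q: "nq s = Some (b, x, y)"
  shows "Inv p z (upd s (answer b x y (p, m))) \<and> mu (card (UNIV::'a::finite set)) B (upd s (answer b x y (p, m))) < mu (card (UNIV::'a set)) B s"
proof -
  interpret rg p z m by (rule R)
  show ?thesis
  proof (cases s)
    case (Cyc C)
    then have "b = True" "x = last C" "y = hd C" using q by auto
    then have a: "answer b x y (p, m) = p (last C) (hd C)" by (simp add: answer_def)
    show ?thesis using cyc_step[OF I[unfolded Cyc] a hB] unfolding Cyc .
  next
    case (Ext gens Hl g W)
    then have "b = True" "x = (if length W < length Hl then Hl ! length W else W ! (length W - length Hl))" "y = g" using q by auto
    then have a: "answer b x y (p, m) = p (if length W < length Hl then Hl ! length W else W ! (length W - length Hl)) g" by (simp add: answer_def)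
    show ?thesis using ext_step[OF I[unfolded Ext] a hB] unfolding Ext .
  next
    case (Mul gens k)
    then show ?thesis using mul_inv_step I by simp
  next
    case (Done gens)
    then show ?thesis using q by simp
  qed
qed

definition PP where "PP p1 z1 m1 p2 z2 m2 s = (Inv p1 z1 s \<and> Inv p2 z2 s \<and> Ag p1 m1 p2 m2 s)"

lemma two_step:
  assumes R1: "rg p1 z1 m1" and R2: "rg p2 z2 m2" and hB: "\<forall>k. 2^k \<le> card (UNIV::'a set) \<longrightarrow> k*k \<le> B"
    and P: "PP p1 z1 m1 p2 z2 m2 (s :: 'a::finite st)" and q: "nq s = Some (b, x, y)"
    and e: "answer b x y (p1, m1) = answer b x y (p2, m2)"
  shows "PP p1 z1 m1 p2 z2 m2 (upd s (answer b x y (p1, m1)))"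
proof -
  have A1: "agrp p1 z1" using R1 rg.axioms(1) by blast
  have A2: "agrp p2 z2" using R2 rg.axioms(1) by blast
  from P have I1: "Inv p1 z1 s" and I2: "Inv p2 z2 s" and Ag: "Ag p1 m1 p2 m2 s" unfolding PP_def by auto
  have J1: "Inv p1 z1 (upd s (answer b x y (p1, m1)))" using single_step[OF R1 hB I1 q] by simp
  have J2: "Inv p2 z2 (upd s (answer b x y (p1, m1)))" using single_step[OF R2 hB I2 q] e by simp
  have "Ag p1 m1 p2 m2 (upd s (answer b x y (p1, m1)))"
  proof (cases s)
    case (Cyc C)
    then have "b = True" "x = last C" "y = hd C" using q by auto
    then have a1: "answer b x y (p1, m1) = p1 (last C) (hd C)" and a2: "answer b x y (p1, m1) = p2 (last C) (hd C)"
      using e by (simp_all add: answer_def)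
    show ?thesis using cyc_ag[OF A1 A2 I1[unfolded Cyc] I2[unfolded Cyc] a1 a2] unfolding Cyc .
  next
    case (Ext gens Hl g W)
    then have "b = True" "x = (if length W < length Hl then Hl ! length W else W ! (length W - length Hl))" "y = g" using q by auto
    then have a1: "answer b x y (p1, m1) = p1 (if length W < length Hl then Hl ! length W else W ! (length W - length Hl)) g"
      and a2: "answer b x y (p1, m1) = p2 (if length W < length Hl then Hl ! length W else W ! (length W - length Hl)) g"
      using e by (simp_all add: answer_def)
    show ?thesis using ext_ag[OF A1 A2 I1[unfolded Ext] I2[unfolded Ext] Ag[unfolded Ext] a1 a2] unfolding Ext .
  next
    case (Mul gens k)
    then have "b = False" "x = fst (List.product gens gens ! k)" "y = snd (List.product gens gens ! k)" using q by auto
    then have mm: "m1 (fst (List.product gens gens ! k)) (snd (List.product gens gens ! k)) = m2 (fst (List.product gens gens ! k)) (snd (List.product gens gens ! k))"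
      using e by (simp add: answer_def)
    show ?thesis using mul_ag[OF I1[unfolded Mul] Ag[unfolded Mul] mm] unfolding Mul .
  next
    case (Done gens)
    then show ?thesis using q by simp
  qed
  then show ?thesis using J1 J2 unfolding PP_def by simp
qed

lemma final:
  assumes R1: "rg p1 z1 m1" and R2: "rg p2 z2 m2"
    and I: "Inv p1 z1 (Done gens)" and Ag: "Ag p1 m1 p2 m2 (Done gens)"
  shows "p1 = p2 \<and> m1 = m2"
proof -
  have pp: "p1 = p2" using Ag by simp
  have A1: "agrp p1 z1" using R1 rg.axioms(1) by blast
  have A2: "agrp p2 z2" using R2 rg.axioms(1) by blast
  have zz: "z2 = z1" using agrp.zero_unique[OF A1, of z2] agrp.lz[OF A2] pp by simp
  have R2': "rg p1 z1 m2" using R2 pp zz by simp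
  have cU: "cl p1 z1 (set gens) = UNIV" using I by simp
  have mg: "\<And>x y. x \<in> set gens \<Longrightarrow> y \<in> set gens \<Longrightarrow> m1 x y = m2 x y" using Ag by simp
  have step1: "\<And>g y. g \<in> set gens \<Longrightarrow> y \<in> cl p1 z1 (set gens) \<Longrightarrow> m1 g y = m2 g y"
  proof -
    fix g y assume g: "g \<in> set gens" and yc: "y \<in> cl p1 z1 (set gens)"
    from yc show "m1 g y = m2 g y"
    proof (induction rule: cl.induct)
      case cl_z then show ?case using rg.mz'[OF R1] rg.mz'[OF R2'] by simp
    next
      case (cl_g h) then show ?case using mg g by simp
    next
      case (cl_p u v) then show ?case using rg.rdist[OF R1] rg.rdist[OF R2'] by simp
    qed
  qed
  have step2: "\<And>x y. x \<in> cl p1 z1 (set gens) \<Longrightarrow> m1 x y = m2 x y"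
  proof -
    fix x y assume "x \<in> cl p1 z1 (set gens)"
    then show "m1 x y = m2 x y"
    proof (induction rule: cl.induct)
      case cl_z then show ?case using rg.mz[OF R1] rg.mz[OF R2'] by simp
    next
      case (cl_g h) then show ?case using step1 cU by simp
    next
      case (cl_p u v) then show ?case using rg.ldist[OF R1] rg.ldist[OF R2'] by simp
    qed
  qed
  have "m1 = m2" using step2 cU by (auto simp: fun_eq_iff)
  then show ?thesis using pp by simp
qed



lemma inv_s0: "agrp p z \<Longrightarrow> Inv p z (Cyc [u])"
  by (simp add: nm_Suc agrp.lz)

lemma nq_none: "nq s = None \<Longrightarrow> \<exists>gens. s = Done gens"
  by (cases s) auto

theorem mainTheorem8:
  fixes n :: nat
  assumes "n = card (UNIV :: ('a::finite) set)"
  shows "\<exists>T :: 'a qtree. product_recovering T (ring_ops :: 'a ops set) \<and>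
           (\<forall>opr \<in> (ring_ops :: 'a ops set).
              real (queries_used T opr) \<le> real n + (log 2 (real n))^2)"
proof -
  define B where "B = (nat \<lfloor>log 2 (real n)\<rfloor>)^2"
  have n1: "n \<ge> 1" using assms by (simp add: Suc_le_eq finite_UNIV_card_ge_0)
  have logn: "log 2 (real n) \<ge> 0" using n1 by simp
  have hB: "\<forall>k. 2^k \<le> card (UNIV::'a set) \<longrightarrow> k*k \<le> B"
  proof (intro allI impI)
    fix k :: nat assume "2^k \<le> card (UNIV::'a set)"
    then have "real (2^k) \<le> real n" using assms by simp
    then have "2 powr (real k) \<le> real n" by (simp add: powr_realpow)
    then have "real k \<le> log 2 (real n)" using n1 by (simp add: le_log_iff)
    then have "int k \<le> \<lfloor>log 2 (real n)\<rfloor>" by (simp add: le_floor_iff)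
    then have "k \<le> nat \<lfloor>log 2 (real n)\<rfloor>" by simp
    then show "k * k \<le> B" unfolding B_def by (simp add: power2_eq_square mult_le_mono)
  qed
  have Breal: "real B \<le> (log 2 (real n))^2"
  proof -
    have "real (nat \<lfloor>log 2 (real n)\<rfloor>) = of_int \<lfloor>log 2 (real n)\<rfloor>" using logn by simp
    also have "\<dots> \<le> log 2 (real n)" by simp
    finally have "real (nat \<lfloor>log 2 (real n)\<rfloor>) \<le> log 2 (real n)" .
    then show ?thesis unfolding B_def by (simp add: power_mono)
  qed
  define s0 where "s0 = (Cyc [undefined] :: 'a st)"
  define F where "F = Suc (n + B)"
  define Y where "Y = (ring_ops :: 'a ops set)"
  define T where "T = build nq upd F s0 Y"
  have mus0: "mu n B s0 = n + B" by (simp add: s0_def)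
  have rch: "\<And>r. r \<in> Y \<Longrightarrow> reaches T r (pth nq upd F s0 r)"
    unfolding T_def by (rule build_reaches)
  have lo: "\<And>r. r \<in> Y \<Longrightarrow> leaf_of T r = pth nq upd F s0 r"
    by (rule leaf_of_eq[OF rch])
  have one: "\<And>p m. (p, m) \<in> Y \<Longrightarrow> \<exists>z. rg p z m \<and> length (pth nq upd F s0 (p, m)) \<le> n + B
       \<and> nq (endst nq upd F s0 (p, m)) = None \<and> Inv p z (endst nq upd F s0 (p, m))"
  proof -
    fix p m assume "(p, m) \<in> Y"
    then obtain z where R: "rg p z m" using ring_ops_rg unfolding Y_def by blast
    have A: "agrp p z" using R rg.axioms(1) by blast
    have "length (pth nq upd F s0 (p, m)) \<le> mu n B s0 \<and> (mu n B s0 \<le> F \<longrightarrow> nq (endst nq upd F s0 (p, m)) = None)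
         \<and> Inv p z (endst nq upd F s0 (p, m))"
    proof (rule run_one[where I = "Inv p z"])
      show "Inv p z s0" unfolding s0_def by (rule inv_s0[OF A])
      fix s b x y assume "Inv p z s" "nq s = Some (b, x, y)"
      then show "Inv p z (upd s (answer b x y (p, m))) \<and> mu n B (upd s (answer b x y (p, m))) < mu n B s"
        using single_step[OF R hB] assms by simp
    qed
    then show "\<exists>z. rg p z m \<and> length (pth nq upd F s0 (p, m)) \<le> n + B
       \<and> nq (endst nq upd F s0 (p, m)) = None \<and> Inv p z (endst nq upd F s0 (p, m))"
      using R mus0 F_def by auto
  qed
  have inj: "inj_on (leaf_of T) Y"
  proof (rule inj_onI)
    fix r1 r2 assume r1: "r1 \<in> Y" and r2: "r2 \<in> Y" and e: "leaf_of T r1 = leaf_of T r2"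
    obtain p1 m1 where rr1: "r1 = (p1, m1)" by (cases r1) auto
    obtain p2 m2 where rr2: "r2 = (p2, m2)" by (cases r2) auto
    from one[of p1 m1] r1 rr1 obtain z1 where R1: "rg p1 z1 m1"
      and N1: "nq (endst nq upd F s0 (p1, m1)) = None" by auto
    from one[of p2 m2] r2 rr2 obtain z2 where R2: "rg p2 z2 m2" by auto
    have ep: "pth nq upd F s0 (p1, m1) = pth nq upd F s0 (p2, m2)" using e lo r1 r2 rr1 rr2 by simp
    have A1: "agrp p1 z1" using R1 rg.axioms(1) by blast
    have A2: "agrp p2 z2" using R2 rg.axioms(1) by blast
    have "PP p1 z1 m1 p2 z2 m2 (endst nq upd F s0 (p1, m1)) \<and> endst nq upd F s0 (p1, m1) = endst nq upd F s0 (p2, m2)"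
    proof (rule run_two[OF ep])
      show "PP p1 z1 m1 p2 z2 m2 s0" unfolding PP_def s0_def using inv_s0[OF A1] inv_s0[OF A2] by simp
      fix s b x y assume "PP p1 z1 m1 p2 z2 m2 s" "nq s = Some (b, x, y)" "answer b x y (p1, m1) = answer b x y (p2, m2)"
      then show "PP p1 z1 m1 p2 z2 m2 (upd s (answer b x y (p1, m1)))" by (rule two_step[OF R1 R2 hB])
    qed
    then have P: "PP p1 z1 m1 p2 z2 m2 (endst nq upd F s0 (p1, m1))" by blast
    obtain gens where D: "endst nq upd F s0 (p1, m1) = Done gens" using nq_none[OF N1] by blast
    from P D have "Inv p1 z1 (Done gens)" "Ag p1 m1 p2 m2 (Done gens)" unfolding PP_def by auto
    from final[OF R1 R2 this] show "r1 = r2" using rr1 rr2 by simp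
  qed
  have img: "leaf_of T ` Y = {ps. leaf_path T ps}"
  proof
    show "leaf_of T ` Y \<subseteq> {ps. leaf_path T ps}"
    proof
      fix ps assume "ps \<in> leaf_of T ` Y"
      then obtain r where r: "r \<in> Y" "ps = leaf_of T r" by blast
      have "leaf_path T (pth nq upd F s0 r)" by (rule reaches_leaf_path[OF rch[OF r(1)]])
      then show "ps \<in> {ps. leaf_path T ps}" using r lo by simp
    qed
  next
    show "{ps. leaf_path T ps} \<subseteq> leaf_of T ` Y"
    proof
      fix ps assume "ps \<in> {ps. leaf_path T ps}"
      then have lp: "leaf_path T ps" by simp
      show "ps \<in> leaf_of T ` Y"
      proof (cases "Y = {}")
        case False
        from build_leaf[OF lp[unfolded T_def] False] obtain r where rY: "r \<in> Y" and pe: "pth nq upd F s0 r = ps" by blast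
        have "ps = leaf_of T r" using lo[OF rY] pe by simp
        then show ?thesis by (rule image_eqI[OF _ rY])
      next
        case True
        have "T = Query True undefined undefined (\<lambda>v. None)" unfolding T_def F_def s0_def True by simp
        then show ?thesis using lp by (auto elim: leaf_path.cases)
      qed
    qed
  qed
  have "\<forall>opr\<in>Y. \<exists>ps. reaches T opr ps" using rch by blast
  then have "product_recovering T Y"
    unfolding product_recovering_def bij_betw_def using inj img by simp
  moreover have "\<forall>opr \<in> Y. real (queries_used T opr) \<le> real n + (log 2 (real n))^2"
  proof
    fix r assume r: "r \<in> Y"
    obtain p m where rr: "r = (p, m)" by (cases r) auto
    from one[of p m] r rr have "length (pth nq upd F s0 r) \<le> n + B" by auto
    then have "real (queries_used T r) \<le> real n + real B" using lo[OF r] unfolding queries_used_def by simp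
    then show "real (queries_used T r) \<le> real n + (log 2 (real n))^2" using Breal by simp
  qed
  ultimately show ?thesis unfolding Y_def by blast
qed


end
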